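(* Let $p\in(1,2]$ and $\delta\ge1$. Then for all $a,b,c,d\in\mathbb R$ and all $e,f\ge0$, $$\big(V_{p-1}(a-b)-V_{p-1}(c-d)\big)\big(V_\delta(a-c)e^p-V_\delta(b-d)f^p\big)$$ $$\ge\tfrac{p-1}{2^{\delta+1}}\big(|a-b|+|c-d|\big)^{p-2}\big(|a-c|+|b-d|\big)^{\delta-1}\big|(a-c)-(b-d)\big|^2(e^p+f^p)-\Big(\tfrac{2^{\delta+1}}{p-1}\Big)^{p-1}\big(|a-c|+|b-d|\big)^{p+\delta-1}|e-f|^p.$$
   Context: For $\gamma>0$ and $a\in\mathbb R$, $V_\gamma(a):=|a|^{\gamma-1}a$, with $V_\gamma(0):=0$. Expressions of the form $0^{p-2}\cdot 0$ (when $|a-b|+|c-d|=0$) are interpreted as $0$. *)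

theory Defs
  imports Complex_Main
begin

definition V :: "real \<Rightarrow> real \<Rightarrow> real" where
  "V \<gamma> a = (if a = 0 then 0 else \<bar>a\<bar> powr (\<gamma> - 1) * a)"

end

theory Submission
  imports Defs "HOL-Analysis.Analysis"
begin


lemma concave_tan:
  fixes q c t :: real
  assumes "0 < q" "q \<le> 1" "c > 0" "t \<ge> 0"
  shows "t powr q \<le> c powr q + q * c powr (q - 1) * (t - c)"
proof (cases "t = 0")
  case True
  have f1: "c powr (q - 1) * c = c powr q" using assms by (simp add: powr_diff)
  have "c powr q + q * c powr (q - 1) * (t - c) = c powr q - q * (c powr (q - 1) * c)"
    using True by (simp add: algebra_simps)
  also have "\<dots> = (1 - q) * c powr q" using f1 by (simp add: algebra_simps)
  finally show ?thesis using True assms by simp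
next
  case False
  hence tp: "t > 0" using assms by simp
  have y: "t powr q * c powr (1 - q) \<le> q * t + (1 - q) * c"
    using Youngs_inequality_0[of q "1-q" t c] assms tp by simp
  have m: "c powr (1 - q) * c powr (q - 1) = 1" using assms by (simp flip: powr_add)
  have m2: "c * c powr (q - 1) = c powr q" using assms by (simp add: powr_diff)
  have "t powr q = t powr q * c powr (1 - q) * c powr (q - 1)" using m by simp
  also have "\<dots> \<le> (q * t + (1 - q) * c) * c powr (q - 1)"
    using y by (simp add: mult_right_mono)
  also have "\<dots> = c powr q + q * c powr (q - 1) * (t - c)"
    using m2 by (simp add: algebra_simps)
  finally show ?thesis .
qed

lemma convex_tan:
  fixes d c x :: real
  assumes "1 \<le> d" "c > 0" "x \<ge> 0"
  shows "c powr d + d * c powr (d - 1) * (x - c) \<le> x powr d"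
proof (cases "x = 0")
  case True
  have f1: "c powr (d - 1) * c = c powr d" using assms by (simp add: powr_diff)
  have "c powr d + d * c powr (d - 1) * (x - c) = c powr d - d * (c powr (d - 1) * c)"
    using True by (simp add: algebra_simps)
  also have "\<dots> = - ((d - 1) * c powr d)" using f1 by (simp add: algebra_simps)
  finally show ?thesis using True assms by simp
next
  case False
  hence xp: "x > 0" using assms by simp
  have y: "(x powr d) powr (1/d) * (c powr d) powr (1 - 1/d) \<le> (1/d) * x powr d + (1 - 1/d) * c powr d"
    using Youngs_inequality_0[of "1/d" "1-1/d" "x powr d" "c powr d"] assms xp by simp
  have e1: "(x powr d) powr (1/d) = x" using assms xp by (simp add: powr_powr)
  have e2: "(c powr d) powr (1 - 1/d) = c powr (d - 1)" using assms
    by (simp add: powr_powr algebra_simps)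
  have m2: "c * c powr (d - 1) = c powr d" using assms by (simp add: powr_diff)
  have "d * (x * c powr (d - 1)) \<le> d * ((1/d) * x powr d + (1 - 1/d) * c powr d)"
    using y e1 e2 assms by (intro mult_left_mono) auto
  also have "\<dots> = x powr d + (d - 1) * c powr d" using assms by (simp add: algebra_simps)
  finally show ?thesis using m2 by (simp add: algebra_simps)
qed


lemma pm1: "a > 0 \<Longrightarrow> a powr (g - 1) * a = a powr (g::real)"
  by (simp add: powr_diff)

lemma V_pos: "a > 0 \<Longrightarrow> V g a = a powr g"
  by (simp add: V_def pm1)

lemma V_neg: "a < 0 \<Longrightarrow> V g a = - ((- a) powr g)"
proof -
  assume a: "a < 0"
  have "\<bar>a\<bar> powr (g - 1) * a = - (\<bar>a\<bar> powr (g - 1) * \<bar>a\<bar>)" using a by simp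
  also have "\<bar>a\<bar> powr (g - 1) * \<bar>a\<bar> = \<bar>a\<bar> powr g" using a by (simp add: powr_diff)
  finally show ?thesis using a by (simp add: V_def)
qed

lemma V_odd: "V g (- a) = - V g a"
  by (simp add: V_def)

lemma V_abs: "\<bar>V g a\<bar> = \<bar>a\<bar> powr g"
proof -
  consider "a > 0" | "a < 0" | "a = 0" by linarith
  then show ?thesis
  proof cases
    case 1 then show ?thesis by (simp add: V_pos)
  next
    case 2 then show ?thesis by (simp add: V_neg)
  next
    case 3 then show ?thesis by (simp add: V_def)
  qed
qed

lemma V_nonneg: "a \<ge> 0 \<Longrightarrow> V g a = a powr g"
  by (cases "a = 0") (auto simp: V_pos V_def pm1)

lemma pw_aux_cc:
  fixes q x s :: real
  assumes "q \<le> 1" "0 \<le> x" "x \<le> s"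
  shows "x * s powr (q - 1) \<le> x powr q"
proof (cases "x = 0")
  case False
  hence xp: "x > 0" using assms by simp
  have "s powr (q - 1) \<le> x powr (q - 1)" using powr_mono2'[of "q-1" x s] assms xp by simp
  hence "x * s powr (q - 1) \<le> x * x powr (q - 1)" using xp by simp
  also have "\<dots> = x powr q" using xp by (simp add: powr_diff)
  finally show ?thesis .
qed simp

lemma pw_aux_cv:
  fixes d x s :: real
  assumes "1 \<le> d" "0 \<le> x" "x \<le> s"
  shows "x powr d \<le> x * s powr (d - 1)"
proof (cases "x = 0")
  case False
  hence xp: "x > 0" using assms by simp
  have "x powr (d - 1) \<le> s powr (d - 1)" using powr_mono2[of "d-1" x s] assms xp by simp
  hence "x * x powr (d - 1) \<le> x * s powr (d - 1)" using xp by simp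
  moreover have "x * x powr (d - 1) = x powr d" using xp by (simp add: powr_diff)
  ultimately show ?thesis by simp
qed simp

lemma subadd:
  fixes q x y :: real
  assumes "0 < q" "q \<le> 1" "0 \<le> x" "0 \<le> y"
  shows "(x + y) powr q \<le> x powr q + y powr q"
proof (cases "x + y = 0")
  case False
  hence s: "x + y > 0" using assms by simp
  have "x * (x+y) powr (q - 1) \<le> x powr q" using pw_aux_cc assms by simp
  moreover have "y * (x+y) powr (q - 1) \<le> y powr q" using pw_aux_cc assms by simp
  moreover have "(x + y) * (x+y) powr (q - 1) = (x+y) powr q" using s by (simp add: powr_diff)
  ultimately show ?thesis by (simp add: algebra_simps)
qed (use assms in auto)

lemma superadd:
  fixes d x y :: real
  assumes "1 \<le> d" "0 \<le> x" "0 \<le> y"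
  shows "x powr d + y powr d \<le> (x + y) powr d"
proof (cases "x + y = 0")
  case False
  hence s: "x + y > 0" using assms by simp
  have "x powr d \<le> x * (x+y) powr (d - 1)" using pw_aux_cv assms by simp
  moreover have "y powr d \<le> y * (x+y) powr (d - 1)" using pw_aux_cv assms by simp
  moreover have "(x + y) * (x+y) powr (d - 1) = (x+y) powr d" using s by (simp add: powr_diff)
  ultimately show ?thesis by (simp add: algebra_simps)
next
  case True
  hence "x = 0" "y = 0" using assms by auto
  then show ?thesis by simp
qed


lemma two_half_pow:
  fixes s g :: real
  assumes "s \<ge> 0"
  shows "2 * (s / 2) powr g = 2 powr (1 - g) * s powr g"
  by (simp add: powr_divide powr_diff)

lemma qlem_nonneg:
  fixes q A B :: real
  assumes q: "0 < q" "q \<le> 1" and AB: "B \<le> A" "0 \<le> B"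
  shows "q * (\<bar>A\<bar> + \<bar>B\<bar>) powr (q - 1) * (A - B) \<le> V q A - V q B
       \<and> V q A - V q B \<le> 2 powr (1 - q) * (A - B) powr q"
proof (cases "A = B")
  case False
  hence Ap: "A > 0" using AB by simp
  have VA: "V q A = A powr q" and VB: "V q B = B powr q" using AB Ap by (simp_all add: V_nonneg)
  have t: "B powr q \<le> A powr q + q * A powr (q - 1) * (B - A)"
    using concave_tan[of q A B] q AB Ap by simp
  have m: "(A + B) powr (q - 1) \<le> A powr (q - 1)" using powr_mono2'[of "q-1" A "A+B"] q AB Ap by simp
  have "q * (A + B) powr (q - 1) * (A - B) \<le> q * A powr (q - 1) * (A - B)"
    using m q AB by (intro mult_right_mono mult_left_mono) auto
  hence lo: "q * (\<bar>A\<bar> + \<bar>B\<bar>) powr (q - 1) * (A - B) \<le> V q A - V q B"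
    using t VA VB AB Ap by (simp add: algebra_simps)
  have sa: "A powr q \<le> (A - B) powr q + B powr q" using subadd[of q "A - B" B] q AB by simp
  have "1 \<le> 2 powr (1 - q)" using q by (intro ge_one_powr_ge_zero) auto
  hence "(A - B) powr q \<le> 2 powr (1 - q) * (A - B) powr q"
    by (simp add: mult_le_cancel_right1)
  then show ?thesis using lo sa VA VB by simp
qed simp

lemma qlem_mixed:
  fixes q A B :: real
  assumes q: "0 < q" "q \<le> 1" and AB: "B < 0" "0 < A"
  shows "q * (\<bar>A\<bar> + \<bar>B\<bar>) powr (q - 1) * (A - B) \<le> V q A - V q B
       \<and> V q A - V q B \<le> 2 powr (1 - q) * (A - B) powr q"
proof -
  define x y where "x = A" and "y = - B"
  have xy: "x > 0" "y > 0" using AB x_def y_def by auto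
  have VV: "V q A - V q B = x powr q + y powr q" using AB by (simp add: V_pos V_neg x_def y_def)
  have T: "\<bar>A\<bar> + \<bar>B\<bar> = x + y" "A - B = x + y" using AB x_def y_def by auto
  have a1: "x * (x+y) powr (q - 1) \<le> x powr q" using pw_aux_cc q xy by simp
  have a2: "y * (x+y) powr (q - 1) \<le> y powr q" using pw_aux_cc q xy by simp
  have "q * (x + y) powr (q - 1) * (x + y) \<le> (x + y) powr (q - 1) * (x + y)"
    using q xy by (intro mult_right_mono) auto
  hence lo: "q * (x + y) powr (q - 1) * (x + y) \<le> x powr q + y powr q"
    using a1 a2 by (simp add: algebra_simps)
  define c where "c = (x + y) / 2"
  have cp: "c > 0" using xy c_def by simp
  have t1: "x powr q \<le> c powr q + q * c powr (q - 1) * (x - c)" using concave_tan q cp xy by simp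
  have t2: "y powr q \<le> c powr q + q * c powr (q - 1) * (y - c)" using concave_tan q cp xy by simp
  have z: "q * c powr (q - 1) * (x - c) + q * c powr (q - 1) * (y - c) = q * c powr (q - 1) * ((x - c) + (y - c))"
    by (simp add: algebra_simps)
  have z2: "(x - c) + (y - c) = 0" by (simp add: c_def)
  have "x powr q + y powr q \<le> 2 * c powr q" using t1 t2 z z2 by simp
  also have "\<dots> = 2 powr (1 - q) * (x + y) powr q" unfolding c_def using xy by (intro two_half_pow) simp
  finally show ?thesis using lo VV T by simp
qed

lemma qlem:
  fixes q A B :: real
  assumes q: "0 < q" "q \<le> 1" and AB: "B \<le> A"
  shows "q * (\<bar>A\<bar> + \<bar>B\<bar>) powr (q - 1) * (A - B) \<le> V q A - V q B
       \<and> V q A - V q B \<le> 2 powr (1 - q) * (A - B) powr q"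
proof -
  consider "0 \<le> B" | "A \<le> 0" | "B < 0 \<and> 0 < A" by linarith
  then show ?thesis
  proof cases
    case 1 then show ?thesis using qlem_nonneg q AB by blast
  next
    case 2
    have e1: "\<bar>-B\<bar> + \<bar>-A\<bar> = \<bar>A\<bar> + \<bar>B\<bar>" "-B - -A = A - B" by simp_all
    have e2: "V q (-B) - V q (-A) = V q A - V q B" by (simp add: V_odd)
    have h1: "-A \<le> -B" "0 \<le> -A" using AB 2 by linarith+
    show ?thesis using qlem_nonneg[where A="-B" and B="-A", OF q h1] unfolding e1 e2 .
  next
    case 3 then show ?thesis using qlem_mixed q by blast
  qed
qed

lemma dlem_nonneg:
  fixes d X Y :: real
  assumes d: "1 \<le> d" and XY: "Y \<le> X" "0 \<le> Y"
  shows "2 powr (1 - d) * (\<bar>X\<bar> + \<bar>Y\<bar>) powr (d - 1) * (X - Y) \<le> V d X - V d Y"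
proof (cases "X = Y")
  case False
  hence Xp: "X > 0" using XY by simp
  have VX: "V d X = X powr d" and VY: "V d Y = Y powr d" using XY Xp by (simp_all add: V_nonneg)
  have a: "Y powr d \<le> Y * X powr (d - 1)" using pw_aux_cv d XY by simp
  have b: "X * X powr (d - 1) = X powr d" using Xp by (simp add: powr_diff)
  have c: "2 powr (1 - d) * (X + Y) powr (d - 1) = ((X + Y) / 2) powr (d - 1)"
    by (simp add: powr_divide powr_diff field_simps)
  have e: "((X + Y) / 2) powr (d - 1) \<le> X powr (d - 1)" using powr_mono2[of "d-1" "(X+Y)/2" X] d XY by simp
  have "2 powr (1 - d) * (X + Y) powr (d - 1) * (X - Y) \<le> X powr (d - 1) * (X - Y)"
    using c e XY by (simp add: mult_right_mono)
  also have "\<dots> \<le> X powr d - Y powr d" using a b by (simp add: algebra_simps)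
  finally show ?thesis using VX VY XY by simp
qed simp

lemma dlem_mixed:
  fixes d X Y :: real
  assumes d: "1 \<le> d" and XY: "Y < 0" "0 < X"
  shows "2 powr (1 - d) * (\<bar>X\<bar> + \<bar>Y\<bar>) powr (d - 1) * (X - Y) \<le> V d X - V d Y"
proof -
  define x y where "x = X" and "y = - Y"
  have xy: "x > 0" "y > 0" using XY x_def y_def by auto
  have VV: "V d X - V d Y = x powr d + y powr d" using XY by (simp add: V_pos V_neg x_def y_def)
  have T: "\<bar>X\<bar> + \<bar>Y\<bar> = x + y" "X - Y = x + y" using XY x_def y_def by auto
  define c where "c = (x + y) / 2"
  have cp: "c > 0" using xy c_def by simp
  have t1: "c powr d + d * c powr (d - 1) * (x - c) \<le> x powr d" using convex_tan d cp xy by simp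
  have t2: "c powr d + d * c powr (d - 1) * (y - c) \<le> y powr d" using convex_tan d cp xy by simp
  have "2 powr (1 - d) * (x + y) powr (d - 1) * (x + y) = 2 powr (1 - d) * (x + y) powr d"
    using xy by (simp add: powr_diff)
  also have "\<dots> = 2 * c powr d" unfolding c_def using two_half_pow[of "x+y" d] xy by simp
  also have "\<dots> \<le> x powr d + y powr d"
  proof -
    have z: "d * c powr (d - 1) * (x - c) + d * c powr (d - 1) * (y - c) = d * c powr (d - 1) * ((x - c) + (y - c))"
      by (simp add: algebra_simps)
    have z2: "(x - c) + (y - c) = 0" by (simp add: c_def)
    show ?thesis using t1 t2 z z2 by simp
  qed
  finally show ?thesis using VV T by simp
qed

lemma dlem:
  fixes d X Y :: real
  assumes d: "1 \<le> d" and XY: "Y \<le> X"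
  shows "2 powr (1 - d) * (\<bar>X\<bar> + \<bar>Y\<bar>) powr (d - 1) * (X - Y) \<le> V d X - V d Y"
proof -
  consider "0 \<le> Y" | "X \<le> 0" | "Y < 0 \<and> 0 < X" by linarith
  then show ?thesis
  proof cases
    case 1 then show ?thesis using dlem_nonneg d XY by blast
  next
    case 2
    have e1: "\<bar>-Y\<bar> + \<bar>-X\<bar> = \<bar>X\<bar> + \<bar>Y\<bar>" "-Y - -X = X - Y" by simp_all
    have e2: "V d (-Y) - V d (-X) = V d X - V d Y" by (simp add: V_odd)
    have h1: "-X \<le> -Y" "0 \<le> -X" using XY 2 by linarith+
    show ?thesis using dlem_nonneg[where X="-Y" and Y="-X", OF d h1] unfolding e1 e2 .
  next
    case 3 then show ?thesis using dlem_mixed d by blast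
  qed
qed

lemma elem_ge:
  fixes p e f :: real
  assumes p: "1 \<le> p" and ef: "0 \<le> f" "f \<le> e"
  shows "e powr p - f powr p \<le> p * e powr (p - 1) * (e - f)"
proof (cases "e = 0")
  case False
  hence "e > 0" using ef by simp
  then show ?thesis using convex_tan[of p e f] p ef by (simp add: algebra_simps)
qed (use ef in simp)

lemma elem:
  fixes p e f :: real
  assumes p: "1 \<le> p" and ef: "0 \<le> f" "0 \<le> e"
  shows "\<bar>e powr p - f powr p\<bar> \<le> p * (max e f) powr (p - 1) * \<bar>e - f\<bar>"
proof (cases "f \<le> e")
  case True
  have "f powr p \<le> e powr p" using powr_mono2[of p f e] p ef True by simp
  then show ?thesis using elem_ge[of p f e] p ef True by (simp add: max_def)
next
  case False
  have "e powr p \<le> f powr p" using powr_mono2[of p e f] p ef False by simp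
  then show ?thesis using elem_ge[of p e f] p ef False by (simp add: max_def abs_minus_commute)
qed



lemma quad_id:
  fixes q c cq1 u be t :: real
  assumes "be * c = q * u"
  shows "c * cq1 * u - (c * cq1 + q * cq1 * (t - c)) * ((q + 1) * u - be * t) = be * q * cq1 * (t - c)^2"
proof -
  have "c * cq1 * u - (c * cq1 + q * cq1 * (t - c)) * ((q + 1) * u - be * t)
     = be * q * cq1 * (t - c)^2 + cq1 * (q * u - be * c) * (q * c - (q + 1) * t)"
    by (simp add: algebra_simps power2_eq_square)
  then show ?thesis using assms by simp
qed

lemma remainder:
  fixes q d S t E F W m e f DD C :: real
  assumes q: "0 < q" "q \<le> 1" and d: "1 \<le> d"
    and S: "S \<ge> 0" and t: "t \<ge> 0" and ef: "e \<ge> 0" "f \<ge> 0"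
    and Wd: "W = \<bar>e - f\<bar>" and md: "m = max e f"
    and Ed: "E = e powr (q + 1)" and Fd: "F = f powr (q + 1)"
    and DD: "0 \<le> DD" "DD \<le> 2 powr (1 - q) * t powr q"
    and Cd: "C = (2 powr (d + 1) / q) powr q"
  shows "DD * (S powr d * \<bar>E - F\<bar> - 2 powr (1 - d) * S powr (d - 1) * t * (E + F) / 2) / 2
         \<le> C * S powr (q + 1 + d - 1) * W powr (q + 1)"
proof -
  define K where "K = 2 powr (1 - d) * S powr (d - 1) * t * (E + F) / 2"
  have EF0: "E \<ge> 0" "F \<ge> 0" using Ed Fd by auto
  have K0: "K \<ge> 0" unfolding K_def using EF0 t by (intro divide_nonneg_pos mult_nonneg_nonneg) auto
  have C0: "C \<ge> 0" using Cd by simp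
  have R0: "0 \<le> C * S powr (q + 1 + d - 1) * W powr (q + 1)" using C0 by simp
  show ?thesis
  proof (cases "S powr d * \<bar>E - F\<bar> - K \<le> 0")
    case True
    then have "DD * (S powr d * \<bar>E - F\<bar> - K) / 2 \<le> 0" using DD
      by (simp add: mult_nonneg_nonpos divide_nonpos_pos)
    then show ?thesis using R0 K_def by simp
  next
    case False
    hence br: "S powr d * \<bar>E - F\<bar> - K > 0" by simp
    have Sp: "S > 0"
    proof (rule ccontr)
      assume "\<not> S > 0" hence "S = 0" using S by simp
      then show False using br K0 by simp
    qed
    have Wp: "W > 0"
    proof (rule ccontr)
      assume "\<not> W > 0" hence "e = f" using Wd by simp
      then show False using br K0 Ed Fd by simp
    qed
    have mp: "m > 0" using Wp Wd md ef by (auto simp: max_def)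
    define sd where "sd = S powr (d - 1)"
    have sdp: "sd > 0" using Sp sd_def by simp
    have Sd: "S powr d = S * sd" using Sp sd_def pm1[of S d] by (simp add: mult.commute)
    define b0 where "b0 = S * \<bar>E - F\<bar> - t * (E + F) / 2 powr d"
    have two: "2 powr (1 - d) / 2 = 1 / 2 powr d" by (simp add: powr_diff)
    have Kx: "K = sd * (t * (E + F) / 2 powr d)"
    proof -
      have "K = (2 powr (1 - d) / 2) * sd * t * (E + F)" unfolding K_def sd_def by simp
      also have "\<dots> = sd * (t * (E + F) / 2 powr d)" unfolding two by simp
      finally show ?thesis .
    qed
    have brx: "S powr d * \<bar>E - F\<bar> - K = sd * b0" unfolding Sd Kx b0_def by (simp add: algebra_simps)
    have b0p: "b0 > 0" using brx br sdp by (simp add: zero_less_mult_iff)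
    define mq where "mq = m powr q"
    have mqp: "mq > 0" using mp mq_def by simp
    have EFdiff: "\<bar>E - F\<bar> \<le> (q + 1) * mq * W"
      using elem[of "q+1" f e] q ef Ed Fd Wd md mq_def by simp
    have mpow: "m powr (q + 1) = mq * m" using mp mq_def by (simp add: powr_add)
    have EFsum: "mq * m \<le> E + F"
    proof -
      have "m powr (q + 1) \<le> E + F" using md Ed Fd EF0 by (auto simp: max_def)
      then show ?thesis using mpow by simp
    qed
    define al where "al = S * (q + 1) * W"
    define be where "be = m / 2 powr d"
    have bep: "be > 0" using be_def mp by simp
    define b1 where "b1 = mq * (al - be * t)"
    have b01: "b0 \<le> b1"
    proof -
      have i1: "S * \<bar>E - F\<bar> \<le> S * ((q + 1) * mq * W)" using EFdiff S by (rule mult_left_mono)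
      have i2: "t * (mq * m) \<le> t * (E + F)" using EFsum t by (rule mult_left_mono)
      have i3: "t * (mq * m) / 2 powr d \<le> t * (E + F) / 2 powr d" using i2 by (simp add: divide_right_mono)
      have "b1 = S * ((q + 1) * mq * W) - t * (mq * m) / 2 powr d"
        unfolding b1_def al_def be_def by (simp add: algebra_simps)
      then show ?thesis unfolding b0_def using i1 i3 by linarith
    qed
    have b1p: "0 < mq * (al - be * t)" using b01 b0p unfolding b1_def by linarith
    have albe: "al - be * t > 0" using b1p mqp by (simp add: zero_less_mult_iff)
    define c where "c = q * 2 powr d * S * W / m"
    have cp: "c > 0" using c_def q Sp Wp mp by simp
    define cq1 where "cq1 = c powr (q - 1)"
    have cq: "c powr q = c * cq1" using cp cq1_def pm1[of c q] by (simp add: mult.commute)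
    have bec: "be * c = q * (S * W)" unfolding be_def c_def using mp by (simp add: field_simps)
    have tan: "t powr q \<le> c powr q + q * cq1 * (t - c)" using concave_tan[of q c t] q cp t cq1_def by simp
    have step1: "t powr q * (al - be * t) \<le> (c * cq1 + q * cq1 * (t - c)) * (al - be * t)"
      using tan cq albe by (intro mult_right_mono) auto
    have qi: "c * cq1 * (S * W) - (c * cq1 + q * cq1 * (t - c)) * ((q + 1) * (S * W) - be * t)
        = be * q * cq1 * (t - c)^2" using quad_id[OF bec] .
    have cq1p: "cq1 \<ge> 0" using cq1_def by simp
    have "be * q * cq1 * (t - c)^2 \<ge> 0" using bep q cq1p by simp
    hence step2: "(c * cq1 + q * cq1 * (t - c)) * (al - be * t) \<le> c powr q * (S * W)"
      using qi cq unfolding al_def by (simp add: algebra_simps)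
    have tq: "t powr q * (al - be * t) \<le> c powr q * (S * W)" using step1 step2 by linarith
    have two_q: "2 powr (1 - q) \<le> 2" using powr_mono[of "1 - q" 1 2] q by simp
    have "DD * b0 \<le> (2 powr (1 - q) * t powr q) * b0" using DD b0p by (intro mult_right_mono) auto
    also have "\<dots> \<le> (2 * t powr q) * b0" using two_q b0p by (intro mult_right_mono) auto
    also have "\<dots> \<le> (2 * t powr q) * b1" using b01 by (intro mult_left_mono) auto
    also have "\<dots> = 2 * mq * (t powr q * (al - be * t))" unfolding b1_def by (simp add: algebra_simps)
    also have "\<dots> \<le> 2 * mq * (c powr q * (S * W))" using tq mqp by (intro mult_left_mono) auto
    finally have DDb: "DD * b0 \<le> 2 * (mq * c powr q) * (S * W)" by (simp add: algebra_simps)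
    have mc: "mq * c powr q = (q * 2 powr d * S * W) powr q"
      unfolding mq_def using mp by (simp add: powr_mult[symmetric] c_def)
    have mc2: "(q * 2 powr d * S * W) powr q \<le> (2 powr d * (S * W)) powr q"
    proof (rule powr_mono2)
      show "0 \<le> q" using q by simp
      show "0 \<le> q * 2 powr d * S * W" using q Sp Wp by simp
      have "q * (2 powr d * S * W) \<le> 1 * (2 powr d * S * W)" using q Sp Wp by (intro mult_right_mono) auto
      then show "q * 2 powr d * S * W \<le> 2 powr d * (S * W)" by (simp add: algebra_simps)
    qed
    have mc3: "(2 powr d * (S * W)) powr q = (2 powr d) powr q * (S * W) powr q" by (simp add: powr_mult)
    have twoC: "(2 powr d) powr q \<le> C"
      unfolding Cd
    proof (rule powr_mono2)
      show "0 \<le> q" using q by simp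
      show "0 \<le> 2 powr d" by simp
      have a: "2 powr (d + 1) = 2 * 2 powr d" by (simp add: powr_add)
      have "2 powr d \<le> 2 * 2 powr d" by simp
      also have "\<dots> \<le> 2 * 2 powr d / q" using q by (simp add: field_simps)
      finally show "2 powr d \<le> 2 powr (d + 1) / q" using a by simp
    qed
    have SWp: "(S * W) powr q * (S * W) = S powr (q + 1) * W powr (q + 1)"
      using Sp Wp by (simp add: powr_add powr_mult)
    have Sexp: "S powr (q + 1 + d - 1) = S powr (q + 1) * sd"
      unfolding sd_def by (simp add: powr_add[symmetric])
    have "DD * (S powr d * \<bar>E - F\<bar> - K) / 2 = sd * (DD * b0) / 2" using brx by simp
    also have "\<dots> \<le> sd * (2 * (mq * c powr q) * (S * W)) / 2" using DDb sdp by simp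
    also have "\<dots> = sd * ((mq * c powr q) * (S * W))" by simp
    also have "\<dots> \<le> sd * (((2 powr d) powr q * (S * W) powr q) * (S * W))"
      using mc mc2 mc3 sdp Sp Wp by (intro mult_left_mono mult_right_mono) auto
    also have "\<dots> = sd * (2 powr d) powr q * (S powr (q + 1) * W powr (q + 1))"
      using SWp by (simp add: algebra_simps)
    also have "\<dots> \<le> sd * C * (S powr (q + 1) * W powr (q + 1))"
      using twoC sdp by (intro mult_right_mono mult_left_mono) auto
    also have "\<dots> = C * S powr (q + 1 + d - 1) * W powr (q + 1)" using Sexp by (simp add: algebra_simps)
    finally show ?thesis using K_def by simp
  qed
qed



theorem lemma2p2:
  fixes p \<delta> a b c d e f :: real
  assumes "1 < p" "p \<le> 2" "\<delta> \<ge> 1" "e \<ge> 0" "f \<ge> 0"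
  shows "(V (p - 1) (a - b) - V (p - 1) (c - d)) * (V \<delta> (a - c) * e powr p - V \<delta> (b - d) * f powr p)
    \<ge> (p - 1) / 2 powr (\<delta> + 1) * (\<bar>a - b\<bar> + \<bar>c - d\<bar>) powr (p - 2)
        * (\<bar>a - c\<bar> + \<bar>b - d\<bar>) powr (\<delta> - 1) * \<bar>(a - c) - (b - d)\<bar>^2 * (e powr p + f powr p)
      - (2 powr (\<delta> + 1) / (p - 1)) powr (p - 1) * (\<bar>a - c\<bar> + \<bar>b - d\<bar>) powr (p + \<delta> - 1) * \<bar>e - f\<bar> powr p"
proof -
  define q where "q = p - 1"
  have q: "0 < q" "q \<le> 1" using assms q_def by auto
  have pq: "p = q + 1" "p - 2 = q - 1" using q_def by auto
  define A B X Y where "A = a - b" and "B = c - d" and "X = a - c" and "Y = b - d"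
  define h where "h = X - Y"
  define t where "t = \<bar>h\<bar>"
  define T S where "T = \<bar>A\<bar> + \<bar>B\<bar>" and "S = \<bar>X\<bar> + \<bar>Y\<bar>"
  define E F where "E = e powr p" and "F = f powr p"
  define D where "D = V q A - V q B"
  define vx vy where "vx = V \<delta> X" and "vy = V \<delta> Y"
  define W where "W = \<bar>e - f\<bar>"
  define C where "C = (2 powr (\<delta> + 1) / q) powr q"
  have hAB: "A - B = h" unfolding A_def B_def h_def X_def Y_def by simp
  have t0: "t \<ge> 0" "S \<ge> 0" "T \<ge> 0" using t_def S_def T_def by auto
  have EF0: "E \<ge> 0" "F \<ge> 0" using E_def F_def by auto
  have bounds: "\<bar>D\<bar> \<ge> q * T powr (q - 1) * t \<and> \<bar>D\<bar> \<le> 2 powr (1 - q) * t powr q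
      \<and> \<bar>vx - vy\<bar> \<ge> 2 powr (1 - \<delta>) * S powr (\<delta> - 1) * t \<and> D * (vx - vy) = \<bar>D\<bar> * \<bar>vx - vy\<bar>"
  proof (cases "h \<ge> 0")
    case True
    have ql: "q * T powr (q - 1) * h \<le> D \<and> D \<le> 2 powr (1 - q) * h powr q"
      using qlem[of q B A] q True hAB unfolding D_def T_def by simp
    have dl: "2 powr (1 - \<delta>) * S powr (\<delta> - 1) * h \<le> vx - vy"
      using dlem[of \<delta> Y X] assms True unfolding vx_def vy_def S_def h_def by simp
    have l0: "0 \<le> q * T powr (q - 1) * h" using q True by simp
    have l1: "0 \<le> 2 powr (1 - \<delta>) * S powr (\<delta> - 1) * h" using True by simp
    have "D \<ge> 0" "vx - vy \<ge> 0" using ql dl l0 l1 by linarith+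
    then show ?thesis using ql dl True t_def by simp
  next
    case False
    have ql: "q * T powr (q - 1) * (- h) \<le> - D \<and> - D \<le> 2 powr (1 - q) * (- h) powr q"
    proof -
      have hBA: "B - A = - h" using hAB by simp
      show ?thesis using qlem[of q A B] q False hAB unfolding D_def T_def hBA by (simp add: add.commute)
    qed
    have dl: "2 powr (1 - \<delta>) * S powr (\<delta> - 1) * (- h) \<le> vy - vx"
      using dlem[of \<delta> X Y] assms False unfolding vx_def vy_def S_def h_def by (simp add: add.commute)
    have l0: "0 \<le> q * T powr (q - 1) * (- h)" using q False by (intro mult_nonneg_nonneg) auto
    have l1: "0 \<le> 2 powr (1 - \<delta>) * S powr (\<delta> - 1) * (- h)" using False by (intro mult_nonneg_nonneg) auto
    have "D \<le> 0" "vx - vy \<le> 0" using ql dl l0 l1 by linarith+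
    moreover have "D * (vx - vy) = - (D * (vy - vx))" by (simp add: algebra_simps)
    ultimately show ?thesis using ql dl False t_def by (simp add: abs_mult mult_nonpos_nonpos)
  qed
  have Pb: "\<bar>vx + vy\<bar> \<le> S powr \<delta>"
  proof -
    have "\<bar>vx + vy\<bar> \<le> \<bar>vx\<bar> + \<bar>vy\<bar>" by (rule abs_triangle_ineq)
    also have "\<dots> = \<bar>X\<bar> powr \<delta> + \<bar>Y\<bar> powr \<delta>" unfolding vx_def vy_def by (simp add: V_abs)
    also have "\<dots> \<le> S powr \<delta>" unfolding S_def using superadd assms by simp
    finally show ?thesis .
  qed
  define K where "K = 2 powr (1 - \<delta>) * S powr (\<delta> - 1) * t * (E + F) / 2"
  have K0: "K \<ge> 0" unfolding K_def using EF0 t0 by (intro divide_nonneg_pos mult_nonneg_nonneg) auto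
  have LHSid: "D * (vx * E - vy * F) = (D * (vx - vy) * (E + F) + D * (vx + vy) * (E - F)) / 2"
    by (simp add: algebra_simps)
  have L1: "D * (vx + vy) * (E - F) \<ge> - (\<bar>D\<bar> * S powr \<delta> * \<bar>E - F\<bar>)"
  proof -
    have "\<bar>D * (vx + vy) * (E - F)\<bar> = \<bar>D\<bar> * \<bar>vx + vy\<bar> * \<bar>E - F\<bar>" by (simp add: abs_mult)
    also have "\<dots> \<le> \<bar>D\<bar> * S powr \<delta> * \<bar>E - F\<bar>" using Pb by (intro mult_right_mono mult_left_mono) auto
    finally show ?thesis by linarith
  qed
  have L2: "D * (vx - vy) * (E + F) \<ge> \<bar>D\<bar> * K * 2"
  proof -
    have "\<bar>D\<bar> * K * 2 = \<bar>D\<bar> * (2 powr (1 - \<delta>) * S powr (\<delta> - 1) * t) * (E + F)"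
      unfolding K_def by simp
    also have "\<dots> \<le> \<bar>D\<bar> * \<bar>vx - vy\<bar> * (E + F)" using bounds EF0
      by (intro mult_right_mono mult_left_mono) auto
    finally show ?thesis using bounds by simp
  qed
  have LHS: "D * (vx * E - vy * F) \<ge> \<bar>D\<bar> * K - \<bar>D\<bar> * S powr \<delta> * \<bar>E - F\<bar> / 2"
  proof -
    have gen: "\<And>L M1 M2 x y :: real. L = (M1 + M2) / 2 \<Longrightarrow> - y \<le> M2 \<Longrightarrow> x * 2 \<le> M1 \<Longrightarrow> x - y / 2 \<le> L"
      by (simp add: field_simps)
    show ?thesis by (rule gen[OF LHSid L1 L2])
  qed
  define R1 where "R1 = q / 2 powr (\<delta> + 1) * T powr (q - 1) * S powr (\<delta> - 1) * t^2 * (E + F)"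
  have R1b: "R1 \<le> \<bar>D\<bar> * K / 2"
  proof -
    have "q * T powr (q - 1) * t * K / 2 \<le> \<bar>D\<bar> * K / 2" using bounds K0
      by (intro divide_right_mono mult_right_mono) auto
    moreover have "q * T powr (q - 1) * t * K / 2 = R1"
    proof -
      have tw: "2 powr (1 - \<delta>) * 2 powr (\<delta> + 1) = 4"
        by (simp add: powr_add[symmetric])
      hence tw2: "2 powr (1 - \<delta>) = 4 / 2 powr (\<delta> + 1)" by (simp add: field_simps)
      show ?thesis unfolding K_def R1_def tw2 by (simp add: power2_eq_square field_simps)
    qed
    ultimately show ?thesis by simp
  qed
  have Rem: "\<bar>D\<bar> * (S powr \<delta> * \<bar>E - F\<bar> - K) / 2 \<le> C * S powr (q + 1 + \<delta> - 1) * W powr (q + 1)"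
    unfolding K_def
    using remainder[of q \<delta> S t e f W "max e f" E F "\<bar>D\<bar>" C] q assms t0 bounds
    unfolding W_def E_def F_def C_def pq by simp
  have main: "D * (vx * E - vy * F) \<ge> R1 - C * S powr (q + 1 + \<delta> - 1) * W powr (q + 1)"
  proof -
    have eqR: "\<bar>D\<bar> * (S powr \<delta> * \<bar>E - F\<bar> - K) / 2 = (\<bar>D\<bar> * S powr \<delta> * \<bar>E - F\<bar> - \<bar>D\<bar> * K) / 2"
      by (simp add: algebra_simps)
    have gen: "\<And>L a c r m :: real. a - c / 2 \<le> L \<Longrightarrow> r \<le> a / 2 \<Longrightarrow> (c - a) / 2 \<le> m \<Longrightarrow> r - m \<le> L"
      by (simp add: field_simps)
    show ?thesis by (rule gen[OF LHS R1b Rem[unfolded eqR]])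
  qed
  have hh: "\<bar>(a - c) - (b - d)\<bar>^2 = t^2" unfolding t_def h_def X_def Y_def by simp
  show ?thesis using main hh
    unfolding R1_def D_def vx_def vy_def E_def F_def C_def W_def A_def B_def X_def Y_def S_def T_def
      q_def by simp
qed

end
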